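(* Let $R$ be a finite ring with identity, $\alpha\in(0,1)$, and $Q$ a probability distribution on $R$ constant on similarity classes. Let $\pi$ be the (unique) stationary distribution of the Markov chain $(X_t)$ on $R$ defined below. If $a,b\in R$ satisfy $S_a=S_b$, then $\pi(a)=\pi(b)$.
   Context: Similarity classes: $a,b$ are similar if $b=uau^{-1}$ for some unit $u$ of $R$. The Markov chain $(X_t)$ on $R$: at each step an independent coin with Heads probability $\alpha$ is tossed; on Heads, $X_{t+1}=X_t+Y$ with $Y$ uniformly distributed on $R$ (independent); on Tails, $X_{t+1}=Z\cdot X_t$ with $Z$ drawn independently from $Q$ (so the transition matrix is $M_R=\frac{\alpha}{|R|}J+(1-\alpha)B_R$, where $J$ is the all-ones matrix and $B_R(a,b)=\sum_{x\in R,\,xa=b}Q(x)$). For $a\in R$, $I_a=Ra$ is the principal left ideal generated by $a$ and $S_a$ is the set of elements of $I_a$ that generate $I_a$ as a left ideal. *)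

theory Defs
  imports Complex_Main
begin

definition ring_unit :: "'a::ring_1 \<Rightarrow> bool" where
  "ring_unit u \<longleftrightarrow> (\<exists>v. u * v = 1 \<and> v * u = 1)"

definition similar :: "'a::ring_1 \<Rightarrow> 'a \<Rightarrow> bool" where
  "similar a b \<longleftrightarrow> (\<exists>u v. u * v = 1 \<and> v * u = 1 \<and> b = u * a * v)"

definition left_ideal_gen :: "'a::ring_1 \<Rightarrow> 'a set" where
  "left_ideal_gen a = {x * a | x. True}"

definition gen_set :: "'a::ring_1 \<Rightarrow> 'a set" where
  "gen_set a = {y \<in> left_ideal_gen a. left_ideal_gen y = left_ideal_gen a}"

definition trans_matrix :: "real \<Rightarrow> ('a::{ring_1,finite} \<Rightarrow> real) \<Rightarrow> 'a \<Rightarrow> 'a \<Rightarrow> real" where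
  "trans_matrix \<alpha> Q a b = \<alpha> / real (card (UNIV :: 'a set)) + (1 - \<alpha>) * (\<Sum>x\<in>{x. x * a = b}. Q x)"

definition is_prob_dist :: "('a::finite \<Rightarrow> real) \<Rightarrow> bool" where
  "is_prob_dist p \<longleftrightarrow> (\<forall>x. p x \<ge> 0) \<and> (\<Sum>x\<in>UNIV. p x) = 1"

definition stationary :: "('a::finite \<Rightarrow> 'a \<Rightarrow> real) \<Rightarrow> ('a \<Rightarrow> real) \<Rightarrow> bool" where
  "stationary M p \<longleftrightarrow> is_prob_dist p \<and> (\<forall>b. p b = (\<Sum>a\<in>UNIV. p a * M a b))"

end

theory Submission
  imports Defs
begin

lemma left_inv_unit:
  fixes z v :: "'a::{ring_1,finite}"
  assumes "v*z = 1" shows "z*v = 1"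
proof -
  have "inj (\<lambda>w. z*w)"
  proof (rule injI)
    fix p q assume "z*p = z*q"
    then have "v*(z*p) = v*(z*q)" by simp
    then show "p = q" by (simp add: mult.assoc[symmetric] assms)
  qed
  then have "surj (\<lambda>w. z*w)" by (simp add: finite_UNIV_inj_surj)
  then obtain w where w: "z*w = 1" by (metis surjD)
  have "v = v*(z*w)" by (simp add: w)
  also have "\<dots> = w" by (simp add: mult.assoc[symmetric] assms)
  finally show ?thesis using w by simp
qed

lemma card_inter_union_eq:
  fixes A B :: "'a set" and C :: "'a set set"
  assumes fA: "finite A" and fB: "finite B"
    and closed: "\<And>I J. I \<in> C \<Longrightarrow> J \<in> C \<Longrightarrow> I \<inter> J \<in> C"
    and eq: "\<And>I. I \<in> C \<Longrightarrow> card (A \<inter> I) = card (B \<inter> I)"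
  shows "\<forall>F. finite F \<and> F \<subseteq> C \<and> card F \<le> n \<longrightarrow> card (A \<inter> \<Union>F) = card (B \<inter> \<Union>F)"
proof (induction n)
  case 0
  then show ?case by auto
next
  case (Suc n)
  show ?case
  proof (intro allI impI)
    fix F assume H: "finite F \<and> F \<subseteq> C \<and> card F \<le> Suc n"
    show "card (A \<inter> \<Union>F) = card (B \<inter> \<Union>F)"
    proof (cases "F = {}")
      case True then show ?thesis by simp
    next
      case False
      then obtain P F' where F: "F = insert P F'" "P \<notin> F'"
        by (metis Set.set_insert ex_in_conv)
      have fF': "finite F'" and cF': "card F' \<le> n" and PC: "P \<in> C" and F'C: "F' \<subseteq> C"
        using H F by (auto simp: card_insert_if split: if_splits)
      define G where "G = (\<lambda>J. P \<inter> J) ` F'"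
      have fG: "finite G" using fF' G_def by simp
      have cG: "card G \<le> n" using cF' fF' G_def card_image_le order_trans by blast
      have GC: "G \<subseteq> C" using F'C PC closed G_def by auto
      have ih1: "card (A \<inter> \<Union>F') = card (B \<inter> \<Union>F')" using Suc.IH fF' cF' F'C by blast
      have ih2: "card (A \<inter> \<Union>G) = card (B \<inter> \<Union>G)" using Suc.IH fG cG GC by blast
      have key: "\<And>X. finite X \<Longrightarrow> card (X \<inter> \<Union>F) + card (X \<inter> \<Union>G) = card (X \<inter> P) + card (X \<inter> \<Union>F')"
      proof -
        fix X :: "'a set" assume fX: "finite X"
        have e1: "X \<inter> \<Union>F = (X \<inter> P) \<union> (X \<inter> \<Union>F')" using F by auto
        have e2: "(X \<inter> P) \<inter> (X \<inter> \<Union>F') = X \<inter> \<Union>G" using G_def by auto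
        show "card (X \<inter> \<Union>F) + card (X \<inter> \<Union>G) = card (X \<inter> P) + card (X \<inter> \<Union>F')"
          using card_Un_Int[of "X \<inter> P" "X \<inter> \<Union>F'"] fX e1 e2 by simp
      qed
      have "card (A \<inter> \<Union>F) + card (A \<inter> \<Union>G) = card (A \<inter> P) + card (A \<inter> \<Union>F')" using key fA .
      moreover have "card (B \<inter> \<Union>F) + card (B \<inter> \<Union>G) = card (B \<inter> P) + card (B \<inter> \<Union>F')" using key fB .
      ultimately show ?thesis using ih1 ih2 eq[OF PC] by simp
    qed
  qed
qed

definition isLI :: "'a::ring_1 set \<Rightarrow> bool" where
  "isLI I \<longleftrightarrow> 0 \<in> I \<and> (\<forall>p\<in>I. \<forall>q\<in>I. p + q \<in> I) \<and> (\<forall>r. \<forall>p\<in>I. r*p \<in> I)"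

lemma isLI_diff: "isLI I \<Longrightarrow> p \<in> I \<Longrightarrow> q \<in> I \<Longrightarrow> p - q \<in> I"
proof -
  assume "isLI I" "p \<in> I" "q \<in> I"
  then have "(-1)*q \<in> I" unfolding isLI_def by blast
  then have "p + (-1)*q \<in> I" using \<open>isLI I\<close> \<open>p\<in>I\<close> unfolding isLI_def by blast
  then show ?thesis by simp
qed

lemma coset_card:
  fixes a c :: "'a::{ring_1,finite}"
  assumes I: "isLI I" and ne: "((\<lambda>l. c + l) ` {z. z*a = 0}) \<inter> I \<noteq> {}"
  shows "card (((\<lambda>l. c + l) ` {z. z*a = 0}) \<inter> I) = card ({z. z*a = 0} \<inter> I)"
proof -
  obtain l0 where l0: "l0*a = 0" "c + l0 \<in> I" using ne by auto
  have "((\<lambda>l. c + l) ` {z. z*a = 0}) \<inter> I = (\<lambda>k. c + l0 + k) ` ({z. z*a = 0} \<inter> I)"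
  proof (rule set_eqI, rule iffI)
    fix y assume "y \<in> ((\<lambda>l. c + l) ` {z. z*a = 0}) \<inter> I"
    then obtain l where l: "l*a = 0" "y = c + l" "y \<in> I" by auto
    have "y - (c + l0) \<in> I" using isLI_diff[OF I l(3) l0(2)] .
    moreover have "(y - (c + l0)) * a = 0" using l l0 by (simp add: algebra_simps)
    moreover have "y = c + l0 + (y - (c + l0))" by simp
    ultimately show "y \<in> (\<lambda>k. c + l0 + k) ` ({z. z*a = 0} \<inter> I)" by blast
  next
    fix y assume "y \<in> (\<lambda>k. c + l0 + k) ` ({z. z*a = 0} \<inter> I)"
    then obtain k where k: "k*a = 0" "k \<in> I" "y = c + l0 + k" by auto
    have "y \<in> I" using I k l0 unfolding isLI_def by auto
    moreover have "(l0 + k)*a = 0" using k l0 by (simp add: algebra_simps)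
    ultimately show "y \<in> ((\<lambda>l. c + l) ` {z. z*a = 0}) \<inter> I" using k(3)
      by (metis (mono_tags, lifting) IntI add.assoc image_eqI mem_Collect_eq)
  qed
  then show ?thesis by (simp add: card_image inj_on_def)
qed

lemma unit_exists:
  fixes a x s :: "'a::{ring_1,finite}"
  assumes sx: "s*x*a = a"
  shows "\<exists>u. ring_unit u \<and> u*a = x*a"
proof -
  define L where "L = {z::'a. z*a = 0}"
  define A where "A = (\<lambda>l. x + l) ` L"
  define B where "B = (\<lambda>l. 1 + l) ` L"
  define C where "C = {I::'a set. isLI I}"
  have closed: "\<And>I J. I \<in> C \<Longrightarrow> J \<in> C \<Longrightarrow> I \<inter> J \<in> C"
    unfolding C_def isLI_def by auto
  have eq: "card (A \<inter> I) = card (B \<inter> I)" if "I \<in> C" for I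
  proof -
    have I: "isLI I" using that C_def by simp
    have iff: "A \<inter> I \<noteq> {} \<longleftrightarrow> B \<inter> I \<noteq> {}"
    proof
      assume "A \<inter> I \<noteq> {}"
      then obtain l where l: "l*a = 0" "x + l \<in> I" unfolding A_def L_def by auto
      have "s*(x+l) \<in> I" using I l unfolding isLI_def by blast
      moreover have "(s*(x+l) - 1)*a = 0" using l sx by (simp add: algebra_simps)
      moreover have "s*(x+l) = 1 + (s*(x+l) - 1)" by simp
      ultimately show "B \<inter> I \<noteq> {}" unfolding B_def L_def by blast
    next
      assume "B \<inter> I \<noteq> {}"
      then obtain l where l: "l*a = 0" "1 + l \<in> I" unfolding B_def L_def by auto
      have "x*(1+l) \<in> I" using I l unfolding isLI_def by blast
      moreover have "(x*l)*a = 0" using l by (simp add: mult.assoc)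
      moreover have "x*(1+l) = x + x*l" by (simp add: algebra_simps)
      ultimately show "A \<inter> I \<noteq> {}" unfolding A_def L_def by auto
    qed
    show ?thesis
    proof (cases "A \<inter> I = {}")
      case True then show ?thesis using iff by simp
    next
      case False
      then have "B \<inter> I \<noteq> {}" using iff by simp
      then show ?thesis using coset_card[OF I] False unfolding A_def B_def L_def by metis
    qed
  qed
  define F where "F = (\<lambda>z. {w*z | w. True}) ` {z::'a. \<not> ring_unit z}"
  have FC: "F \<subseteq> C"
  proof
    fix I assume "I \<in> F"
    then obtain z where I: "I = {w*z | w. True}" unfolding F_def by auto
    have "0 \<in> I" using I by (metis (mono_tags, lifting) mem_Collect_eq mult_zero_left)
    moreover have "\<forall>p\<in>I. \<forall>q\<in>I. p + q \<in> I"
    proof (intro ballI)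
      fix p q assume "p \<in> I" "q \<in> I"
      then obtain w1 w2 where "p = w1*z" "q = w2*z" using I by auto
      then have "p + q = (w1+w2)*z" by (simp add: distrib_right)
      then show "p + q \<in> I" using I by auto
    qed
    moreover have "\<forall>r. \<forall>p\<in>I. r*p \<in> I"
    proof (intro allI ballI)
      fix r p assume "p \<in> I"
      then obtain w1 where "p = w1*z" using I by auto
      then have "r*p = (r*w1)*z" by (simp add: mult.assoc)
      then show "r*p \<in> I" using I by auto
    qed
    ultimately show "I \<in> C" unfolding C_def isLI_def by blast
  qed
  have UF: "\<Union>F = {z. \<not> ring_unit z}"
  proof (rule set_eqI, rule iffI)
    fix y assume "y \<in> \<Union>F"
    then obtain w z where wz: "\<not> ring_unit z" "y = w*z" unfolding F_def by auto
    show "y \<in> {z. \<not> ring_unit z}"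
    proof (rule ccontr)
      assume "y \<notin> {z. \<not> ring_unit z}"
      then obtain v where "y*v = 1" "v*y = 1" unfolding ring_unit_def by auto
      then have "(v*w)*z = 1" using wz by (simp add: mult.assoc)
      then have "z*(v*w) = 1" by (rule left_inv_unit)
      then show False using wz \<open>(v*w)*z = 1\<close> unfolding ring_unit_def by blast
    qed
  next
    fix y :: 'a assume "y \<in> {z. \<not> ring_unit z}"
    moreover have "y \<in> {w*y | w. True}" by (metis (mono_tags, lifting) mem_Collect_eq mult_1_left)
    ultimately show "y \<in> \<Union>F" unfolding F_def by blast
  qed
  have "card (A \<inter> \<Union>F) = card (B \<inter> \<Union>F)"
    using card_inter_union_eq[of A B C, OF _ _ closed eq, of "card F"] FC by auto
  then have N: "card (A \<inter> {z. \<not> ring_unit z}) = card (B \<inter> {z. \<not> ring_unit z})" using UF by simp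
  have cA: "card A = card L" unfolding A_def by (simp add: card_image inj_on_def)
  have cB: "card B = card L" unfolding B_def by (simp add: card_image inj_on_def)
  have "card A = card (A \<inter> {z. \<not> ring_unit z}) + card (A - {z. \<not> ring_unit z})"
    by (rule card_Int_Diff) simp
  moreover have "card B = card (B \<inter> {z. \<not> ring_unit z}) + card (B - {z. \<not> ring_unit z})"
    by (rule card_Int_Diff) simp
  ultimately have eqD: "card (A - {z. \<not> ring_unit z}) = card (B - {z. \<not> ring_unit z})"
    using N cA cB by simp
  have "1 \<in> B - {z. \<not> ring_unit z}" unfolding B_def L_def ring_unit_def by force
  then have "card (B - {z. \<not> ring_unit z}) > 0" by (metis card_gt_0_iff empty_iff finite)
  then have "A - {z. \<not> ring_unit z} \<noteq> {}" using eqD by (metis card.empty less_irrefl)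
  then obtain l where l: "l*a = 0" "ring_unit (x + l)" unfolding A_def L_def by auto
  have "(x+l)*a = x*a" using l by (simp add: algebra_simps)
  then show ?thesis using l by blast
qed

definition Bm :: "('a::{ring_1,finite} \<Rightarrow> real) \<Rightarrow> 'a \<Rightarrow> 'a \<Rightarrow> real" where
  "Bm Q a b = (\<Sum>x\<in>{x. x * a = b}. Q x)"

lemma Bm_nonneg: "(\<And>x. Q x \<ge> 0) \<Longrightarrow> Bm Q a b \<ge> 0"
  unfolding Bm_def by (simp add: sum_nonneg)

lemma Bm_rowsum:
  fixes Q :: "'a::{ring_1,finite} \<Rightarrow> real"
  shows "(\<Sum>b\<in>UNIV. Bm Q a b) = (\<Sum>x\<in>UNIV. Q x)"
  unfolding Bm_def using sum.group[of "UNIV::'a set" "UNIV::'a set" "\<lambda>x. x*a" Q] by simp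

lemma Bm_unit:
  fixes Q :: "'a::{ring_1,finite} \<Rightarrow> real"
  assumes sim: "\<And>x y. similar x y \<Longrightarrow> Q x = Q y"
    and uv: "u*v = 1" "v*u = 1"
  shows "Bm Q (u*a) (u*b) = Bm Q a b"
  unfolding Bm_def
proof (rule sum.reindex_bij_witness[of _ "\<lambda>y. u*y*v" "\<lambda>x. v*x*u"])
  fix x assume "x \<in> {x. x * (u * a) = u * b}"
  then have "x*(u*a) = u*b" by simp
  then have "v*(x*(u*a)) = v*(u*b)" by simp
  then show "v*x*u \<in> {x. x * a = b}" using uv by (simp add: mult.assoc[symmetric])
next
  fix x assume "x \<in> {x. x * (u * a) = u * b}"
  show "u * (v * x * u) * v = x" using uv by (metis mult.assoc mult_1_left mult_1_right)
next
  fix y assume "y \<in> {x. x * a = b}"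
  show "v * (u * y * v) * u = y" using uv by (metis mult.assoc mult_1_left mult_1_right)
next
  fix y assume "y \<in> {x. x * a = b}"
  then have "y*a = b" by simp
  have "u*y*v*(u*a) = u*y*(v*u)*a" by (simp add: mult.assoc)
  then show "u*y*v \<in> {x. x * (u * a) = u * b}" using uv \<open>y*a = b\<close> by (simp add: mult.assoc)
next
  fix x assume "x \<in> {x. x * (u * a) = u * b}"
  have "similar x (v*x*u)" unfolding similar_def using uv by blast
  then show "Q (v * x * u) = Q x"  using sim by simp
qed

theorem proposition3p1:
  fixes \<alpha> :: real and Q \<pi> :: "'a::{ring_1,finite} \<Rightarrow> real" and a b :: 'a
  assumes "0 < \<alpha>" and "\<alpha> < 1"
    and "is_prob_dist Q"
    and "\<And>x y. similar x y \<Longrightarrow> Q x = Q y"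
    and "stationary (trans_matrix \<alpha> Q) \<pi>"
    and "gen_set a = gen_set b"
  shows "\<pi> a = \<pi> b"
proof -
  define n where "n = real (card (UNIV::'a set))"
  have Qnn: "\<And>x. Q x \<ge> 0" and Qs: "(\<Sum>x\<in>UNIV. Q x) = 1" using assms(3) unfolding is_prob_dist_def by auto
  have Bnn: "\<And>a c. Bm Q a c \<ge> 0" unfolding Bm_def using Qnn by (simp add: sum_nonneg)
  have ps: "(\<Sum>x\<in>UNIV. \<pi> x) = 1" and pst: "\<And>b. \<pi> b = (\<Sum>a\<in>UNIV. \<pi> a * trans_matrix \<alpha> Q a b)"
    using assms(5) unfolding stationary_def is_prob_dist_def by blast+
  have fix1: "\<pi> c = \<alpha>/n + (1-\<alpha>) * (\<Sum>a\<in>UNIV. \<pi> a * Bm Q a c)" for c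
  proof -
    have "\<pi> c = (\<Sum>a\<in>UNIV. \<alpha>/n * \<pi> a + (1-\<alpha>) * (\<pi> a * Bm Q a c))"
      unfolding pst[of c] trans_matrix_def Bm_def n_def by (rule sum.cong) (auto simp: algebra_simps)
    also have "\<dots> = \<alpha>/n * (\<Sum>a\<in>UNIV. \<pi> a) + (1-\<alpha>) * (\<Sum>a\<in>UNIV. \<pi> a * Bm Q a c)"
      by (simp add: sum.distrib sum_distrib_left)
    finally show ?thesis using ps by simp
  qed
  have inv: "\<pi> (u*c) = \<pi> c" if uv: "u*v = 1" "v*u = 1" for u v c
  proof -
    define d where "d x = \<pi> x - \<pi> (u*x)" for x
    have sh: "(\<Sum>a\<in>UNIV. \<pi> a * Bm Q a (u*y)) = (\<Sum>a\<in>UNIV. \<pi> (u*a) * Bm Q a y)" for y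
    proof (rule sum.reindex_bij_witness[of _ "\<lambda>a. u*a" "\<lambda>a. v*a"])
      fix a show "u * (v * a) = a" using uv by (simp add: mult.assoc[symmetric])
    next
      fix a show "v * (u * a) = a" using uv by (simp add: mult.assoc[symmetric])
    next
      fix a
      have "u*(v*a) = a" using uv by (simp add: mult.assoc[symmetric])
      then show "\<pi> (u*(v*a)) * Bm Q (v*a) y = \<pi> a * Bm Q a (u*y)"
        using Bm_unit[OF assms(4) uv, where a="v*a" and b=y] by simp
    qed auto
    have drec: "d y = (1-\<alpha>) * (\<Sum>a\<in>UNIV. d a * Bm Q a y)" for y
    proof -
      have "d y = (1-\<alpha>) * (\<Sum>a\<in>UNIV. \<pi> a * Bm Q a y) - (1-\<alpha>) * (\<Sum>a\<in>UNIV. \<pi> (u*a) * Bm Q a y)"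
        unfolding d_def using fix1[of y] fix1[of "u*y"] sh[of y] by simp
      also have "\<dots> = (1-\<alpha>) * (\<Sum>a\<in>UNIV. d a * Bm Q a y)"
        unfolding d_def by (simp add: algebra_simps sum_subtractf)
      finally show ?thesis .
    qed
    have le1: "\<bar>d y\<bar> \<le> (1-\<alpha>) * (\<Sum>a\<in>UNIV. \<bar>d a\<bar> * Bm Q a y)" for y
    proof -
      have "\<bar>d y\<bar> = (1-\<alpha>) * \<bar>\<Sum>a\<in>UNIV. d a * Bm Q a y\<bar>"
        using drec[of y] assms(2) by (simp add: abs_mult)
      also have "\<dots> \<le> (1-\<alpha>) * (\<Sum>a\<in>UNIV. \<bar>d a * Bm Q a y\<bar>)"
        using assms(2) by (intro mult_left_mono sum_abs) auto
      also have "\<dots> = (1-\<alpha>) * (\<Sum>a\<in>UNIV. \<bar>d a\<bar> * Bm Q a y)"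
        using Bnn by (simp add: abs_mult)
      finally show ?thesis .
    qed
    have "(\<Sum>y\<in>UNIV. \<bar>d y\<bar>) \<le> (\<Sum>y\<in>UNIV. (1-\<alpha>) * (\<Sum>a\<in>UNIV. \<bar>d a\<bar> * Bm Q a y))"
      by (rule sum_mono) (rule le1)
    also have "\<dots> = (1-\<alpha>) * (\<Sum>y\<in>UNIV. \<Sum>a\<in>UNIV. \<bar>d a\<bar> * Bm Q a y)"
      by (simp only: sum_distrib_left)
    also have "\<dots> = (1-\<alpha>) * (\<Sum>a\<in>UNIV. \<Sum>y\<in>UNIV. \<bar>d a\<bar> * Bm Q a y)"
      by (subst sum.swap) (rule refl)
    also have "\<dots> = (1-\<alpha>) * (\<Sum>a\<in>UNIV. \<bar>d a\<bar> * (\<Sum>y\<in>UNIV. Bm Q a y))"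
      by (simp only: sum_distrib_left)
    also have "\<dots> = (1-\<alpha>) * (\<Sum>a\<in>UNIV. \<bar>d a\<bar>)"
      using Bm_rowsum[of Q] Qs by simp
    finally have "\<alpha> * (\<Sum>y\<in>UNIV. \<bar>d y\<bar>) \<le> 0" by (simp add: algebra_simps)
    then have "(\<Sum>y\<in>UNIV. \<bar>d y\<bar>) \<le> 0" using assms(1)
      by (simp add: mult_le_0_iff)
    then have "(\<Sum>y\<in>UNIV. \<bar>d y\<bar>) = 0" by (meson antisym sum_nonneg abs_ge_zero)
    then have "\<bar>d c\<bar> = 0" by (simp add: sum_nonneg_eq_0_iff)
    then show ?thesis unfolding d_def by simp
  qed
  have "a \<in> gen_set a" unfolding gen_set_def left_ideal_gen_def
    by (auto intro: exI[of _ 1])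
  then have "left_ideal_gen a = left_ideal_gen b" using assms(6) unfolding gen_set_def by auto
  moreover have "b \<in> left_ideal_gen b" "a \<in> left_ideal_gen a"
    unfolding left_ideal_gen_def by (auto intro: exI[of _ 1])
  ultimately have "b \<in> left_ideal_gen a" "a \<in> left_ideal_gen b" by auto
  then obtain r s where r: "b = r*a" and s: "a = s*b" unfolding left_ideal_gen_def by blast
  have "s*r*a = a" using r s by (simp add: mult.assoc)
  then obtain u where u: "ring_unit u" "u*a = r*a" using unit_exists by blast
  then obtain v where "u*v = 1" "v*u = 1" unfolding ring_unit_def by blast
  then have "\<pi> (u*a) = \<pi> a" by (rule inv)
  then show ?thesis using u r by simp
qed

end
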